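(* Consider the (unscaled) HILT model on $N$ nodes with weight $\gamma=\Gamma/(N-1)$, $\Gamma\in(0,1]$, and i.i.d. thresholds $\Theta_1,\dots,\Theta_N$ with continuous c.d.f. $F$ satisfying $F(0)=0$. Let $\mathcal A(0)$ be a fixed nonempty initial set of destinations, $\mathcal D(0)=\mathcal A(0)$, $\mathcal B(0)=\emptyset$, and for $k\ge0$ let $\mathcal A(k+1)=\mathcal A(k)\cup\{i\notin\mathcal A(k):\gamma|\mathcal A(k)|\ge\Theta_i\}$, $\mathcal D(k+1)=\mathcal A(k+1)\setminus\mathcal A(k)$, $\mathcal B(k+1)=\mathcal A(k)$. Let $B(k)=|\mathcal B(k)|$, $D(k)=|\mathcal D(k)|$. Then $(B(k),D(k))_{k\ge0}$ is a discrete-time Markov chain: $B(k+1)=B(k)+D(k)$, and for every $k\ge0$ and every history with positive probability ending in $(B(k),D(k))=(j,m)$ with $F(\gamma j)<1$, $$\mathbb{P}\big(D(k+1)=\ell\,\big|\,(B(0),D(0)),\dots,(B(k),D(k))\big)=\binom{N-j-m}{\ell}p^\ell(1-p)^{N-j-m-\ell},\quad p=\frac{F(\gamma(j+m))-F(\gamma j)}{1-F(\gamma j)}.$$ *)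

theory Defs
  imports "HOL-Probability.Probability"
begin

definition hilt_step :: "nat \<Rightarrow> real \<Rightarrow> (nat \<Rightarrow> real) \<Rightarrow> nat set \<Rightarrow> nat set" where
  "hilt_step N \<gamma> \<theta> A = A \<union> {i \<in> {..<N}. i \<notin> A \<and> \<gamma> * real (card A) \<ge> \<theta> i}"

fun hilt_A :: "nat \<Rightarrow> real \<Rightarrow> (nat \<Rightarrow> real) \<Rightarrow> nat set \<Rightarrow> nat \<Rightarrow> nat set" where
  "hilt_A N \<gamma> \<theta> A0 0 = A0"
| "hilt_A N \<gamma> \<theta> A0 (Suc k) = hilt_step N \<gamma> \<theta> (hilt_A N \<gamma> \<theta> A0 k)"

fun hilt_Bset :: "nat \<Rightarrow> real \<Rightarrow> (nat \<Rightarrow> real) \<Rightarrow> nat set \<Rightarrow> nat \<Rightarrow> nat set" where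
  "hilt_Bset N \<gamma> \<theta> A0 0 = {}"
| "hilt_Bset N \<gamma> \<theta> A0 (Suc k) = hilt_A N \<gamma> \<theta> A0 k"

fun hilt_Dset :: "nat \<Rightarrow> real \<Rightarrow> (nat \<Rightarrow> real) \<Rightarrow> nat set \<Rightarrow> nat \<Rightarrow> nat set" where
  "hilt_Dset N \<gamma> \<theta> A0 0 = A0"
| "hilt_Dset N \<gamma> \<theta> A0 (Suc k) = hilt_A N \<gamma> \<theta> A0 (Suc k) - hilt_A N \<gamma> \<theta> A0 k"

definition hilt_B :: "nat \<Rightarrow> real \<Rightarrow> (nat \<Rightarrow> real) \<Rightarrow> nat set \<Rightarrow> nat \<Rightarrow> nat" where
  "hilt_B N \<gamma> \<theta> A0 k = card (hilt_Bset N \<gamma> \<theta> A0 k)"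

definition hilt_D :: "nat \<Rightarrow> real \<Rightarrow> (nat \<Rightarrow> real) \<Rightarrow> nat set \<Rightarrow> nat \<Rightarrow> nat" where
  "hilt_D N \<gamma> \<theta> A0 k = card (hilt_Dset N \<gamma> \<theta> A0 k)"

end

theory Submission
  imports Defs
begin

lemma A_sub: "A0 \<subseteq> {..<N} \<Longrightarrow> hilt_A N \<gamma> \<theta> A0 k \<subseteq> {..<N}"
  by (induction k) (auto simp: hilt_step_def)

lemma A_mono_Suc: "hilt_A N \<gamma> \<theta> A0 k \<subseteq> hilt_A N \<gamma> \<theta> A0 (Suc k)"
  by (auto simp: hilt_step_def)

lemma part1:
  assumes "finite A0"
  shows "hilt_B N \<gamma> \<theta> A0 (Suc k) = hilt_B N \<gamma> \<theta> A0 k + hilt_D N \<gamma> \<theta> A0 k"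
proof (cases k)
  case 0 then show ?thesis by (simp add: hilt_B_def hilt_D_def)
next
  case (Suc k')
  have fin: "finite (hilt_A N \<gamma> \<theta> A0 (Suc k'))"
    using assms by (induction k') (auto simp: hilt_step_def)
  have "card (hilt_A N \<gamma> \<theta> A0 (Suc k')) = card (hilt_A N \<gamma> \<theta> A0 k') + card (hilt_A N \<gamma> \<theta> A0 (Suc k') - hilt_A N \<gamma> \<theta> A0 k')"
    using fin A_mono_Suc[of N \<gamma> \<theta> A0 k'] 
    by (metis card_Diff_subset card_mono finite_subset le_add_diff_inverse)
  then show ?thesis using Suc by (simp add: hilt_B_def hilt_D_def)
qed

definition Jset :: "real \<Rightarrow> (nat \<Rightarrow> nat set) \<Rightarrow> nat \<Rightarrow> nat \<Rightarrow> real set" where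
 "Jset \<gamma> X k i = {x. \<forall>r<k. i \<notin> X r \<longrightarrow> (x \<le> \<gamma> * real (card (X r)) \<longleftrightarrow> i \<in> X (Suc r))}"

lemma step_iff:
  assumes "Y \<subseteq> Z" "Z \<subseteq> {..<N}"
  shows "hilt_step N \<gamma> \<theta> Y = Z \<longleftrightarrow> (\<forall>i<N. i \<notin> Y \<longrightarrow> (\<theta> i \<le> \<gamma> * real (card Y) \<longleftrightarrow> i \<in> Z))"
  using assms unfolding hilt_step_def by (auto; blast)

lemma Jset_Suc: "x \<in> Jset \<gamma> X (Suc k) i \<longleftrightarrow> x \<in> Jset \<gamma> X k i \<and> (i \<notin> X k \<longrightarrow> (x \<le> \<gamma> * real (card (X k)) \<longleftrightarrow> i \<in> X (Suc k)))"
  by (auto simp: Jset_def less_Suc_eq)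

lemma chain_iff:
  assumes "X 0 = A0" "\<forall>r<k. X r \<subseteq> X (Suc r)" "\<forall>r\<le>k. X r \<subseteq> {..<N}"
  shows "(\<forall>r\<le>k. hilt_A N \<gamma> \<theta> A0 r = X r) \<longleftrightarrow> (\<forall>i<N. \<theta> i \<in> Jset \<gamma> X k i)"
  using assms
proof (induction k)
  case 0 then show ?case by (simp add: Jset_def)
next
  case (Suc k)
  have IH: "(\<forall>r\<le>k. hilt_A N \<gamma> \<theta> A0 r = X r) \<longleftrightarrow> (\<forall>i<N. \<theta> i \<in> Jset \<gamma> X k i)"
    using Suc by auto
  have "(\<forall>r\<le>Suc k. hilt_A N \<gamma> \<theta> A0 r = X r) \<longleftrightarrow>
        (\<forall>r\<le>k. hilt_A N \<gamma> \<theta> A0 r = X r) \<and> hilt_step N \<gamma> \<theta> (X k) = X (Suc k)"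
  proof -
    have "(\<forall>r\<le>Suc k. hilt_A N \<gamma> \<theta> A0 r = X r) \<longleftrightarrow>
        (\<forall>r\<le>k. hilt_A N \<gamma> \<theta> A0 r = X r) \<and> hilt_A N \<gamma> \<theta> A0 (Suc k) = X (Suc k)"
      by (auto simp: le_Suc_eq)
    then show ?thesis by auto
  qed
  also have "\<dots> \<longleftrightarrow> (\<forall>i<N. \<theta> i \<in> Jset \<gamma> X k i) \<and> (\<forall>i<N. i \<notin> X k \<longrightarrow> (\<theta> i \<le> \<gamma> * real (card (X k)) \<longleftrightarrow> i \<in> X (Suc k)))"
    using IH step_iff[of "X k" "X (Suc k)" N \<gamma> \<theta>] Suc.prems by auto
  also have "\<dots> \<longleftrightarrow> (\<forall>i<N. \<theta> i \<in> Jset \<gamma> X (Suc k) i)"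
    by (auto simp: Jset_Suc)
  finally show ?case .
qed

lemma Jset_borel: "Jset \<gamma> X k i \<in> sets borel"
proof (induction k)
  case 0 then show ?case by (simp add: Jset_def)
next
  case (Suc k)
  have "Jset \<gamma> X (Suc k) i = Jset \<gamma> X k i \<inter> {x. i \<notin> X k \<longrightarrow> (x \<le> \<gamma> * real (card (X k)) \<longleftrightarrow> i \<in> X (Suc k))}"
    using Jset_Suc by blast
  moreover have "{x::real. i \<notin> X k \<longrightarrow> (x \<le> \<gamma> * real (card (X k)) \<longleftrightarrow> i \<in> X (Suc k))} \<in> sets borel"
    by measurable
  ultimately show ?case using Suc by auto
qed

lemma chain_event:
  assumes "prob_space M" and indep: "prob_space.indep_vars M (\<lambda>_. borel) \<Theta> {..<N}" and "N > 0"
   and "X 0 = A0" "\<forall>r<k. X r \<subseteq> X (Suc r)" "\<forall>r\<le>k. X r \<subseteq> {..<N}"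
   and rv: "\<And>i. i < N \<Longrightarrow> \<Theta> i \<in> borel_measurable M"
  shows "{\<omega>\<in>space M. \<forall>r\<le>k. hilt_A N \<gamma> (\<lambda>i. \<Theta> i \<omega>) A0 r = X r} \<in> sets M"
    and "measure M {\<omega>\<in>space M. \<forall>r\<le>k. hilt_A N \<gamma> (\<lambda>i. \<Theta> i \<omega>) A0 r = X r}
         = (\<Prod>i<N. measure M (\<Theta> i -` Jset \<gamma> X k i \<inter> space M))"
proof -
  interpret P: prob_space M by fact
  have eq: "{\<omega>\<in>space M. \<forall>r\<le>k. hilt_A N \<gamma> (\<lambda>i. \<Theta> i \<omega>) A0 r = X r}
         = (\<Inter>i\<in>{..<N}. \<Theta> i -` Jset \<gamma> X k i \<inter> space M)"
    using chain_iff[OF assms(4,5,6), of \<gamma>] \<open>N > 0\<close> by auto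
  show "{\<omega>\<in>space M. \<forall>r\<le>k. hilt_A N \<gamma> (\<lambda>i. \<Theta> i \<omega>) A0 r = X r} \<in> sets M"
    unfolding eq using \<open>N > 0\<close> rv Jset_borel
    by (intro sets.finite_INT) (auto intro: measurable_sets)
  show "measure M {\<omega>\<in>space M. \<forall>r\<le>k. hilt_A N \<gamma> (\<lambda>i. \<Theta> i \<omega>) A0 r = X r}
         = (\<Prod>i<N. measure M (\<Theta> i -` Jset \<gamma> X k i \<inter> space M))"
    unfolding eq using \<open>N > 0\<close>
    by (intro P.indep_varsD[OF indep]) (auto simp: Jset_borel)
qed

lemma chain_mono: "\<forall>r<k. X r \<subseteq> X (Suc r) \<Longrightarrow> r \<le> k \<Longrightarrow> X r \<subseteq> X k"
  by (induction k) (auto simp: le_Suc_eq)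

lemma Jset_cong: "\<forall>r\<le>k. X r = Y r \<Longrightarrow> Jset \<gamma> X k i = Jset \<gamma> Y k i"
  by (auto simp: Jset_def)

definition Bc :: "(nat \<Rightarrow> nat set) \<Rightarrow> nat \<Rightarrow> nat" where
  "Bc X i = (if i = 0 then 0 else card (X (i - 1)))"
definition Dc :: "(nat \<Rightarrow> nat set) \<Rightarrow> nat \<Rightarrow> nat" where
  "Dc X i = (if i = 0 then card (X 0) else card (X i - X (i - 1)))"

lemma BD_of_chain:
  assumes "\<forall>r\<le>k. hilt_A N \<gamma> \<theta> A0 r = X r" "i \<le> k"
  shows "hilt_B N \<gamma> \<theta> A0 i = Bc X i \<and> hilt_D N \<gamma> \<theta> A0 i = Dc X i"
proof (cases i)
  case 0 then show ?thesis using assms by (auto simp: hilt_B_def hilt_D_def Bc_def Dc_def)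
next
  case (Suc i')
  then have "hilt_A N \<gamma> \<theta> A0 i' = X i'" "hilt_A N \<gamma> \<theta> A0 (Suc i') = X (Suc i')" using assms Suc by (simp_all del: hilt_A.simps)
  then show ?thesis using Suc by (simp add: hilt_B_def hilt_D_def Bc_def Dc_def del: hilt_A.simps)
qed

lemma pr_lemmas:
  fixes \<Theta> :: "'a \<Rightarrow> real"
  assumes "prob_space M" and rv: "\<Theta> \<in> borel_measurable M"
    and cdf: "\<And>x. measure M {\<omega> \<in> space M. \<Theta> \<omega> \<le> x} = F x"
  shows "measure M (\<Theta> -` {..c} \<inter> space M) = F c"
    and "measure M (\<Theta> -` {c<..} \<inter> space M) = 1 - F c"
    and "c \<le> d \<Longrightarrow> measure M (\<Theta> -` {c<..d} \<inter> space M) = F d - F c"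
    and "measure M (\<Theta> -` UNIV \<inter> space M) = 1"
proof -
  interpret P: prob_space M by fact
  have le: "\<Theta> -` {..x} \<inter> space M = {\<omega> \<in> space M. \<Theta> \<omega> \<le> x}" for x by auto
  have meas: "\<Theta> -` S \<inter> space M \<in> sets M" if "S \<in> sets borel" for S
    using rv that by (rule measurable_sets)
  show 1: "measure M (\<Theta> -` {..c} \<inter> space M) = F c" for c using cdf le by simp
  have "\<Theta> -` {c<..} \<inter> space M = space M - \<Theta> -` {..c} \<inter> space M" by (auto simp: not_le)
  then show "measure M (\<Theta> -` {c<..} \<inter> space M) = 1 - F c"
    using P.prob_compl[OF meas[of "{..c}"]] 1 by simp
  show "c \<le> d \<Longrightarrow> measure M (\<Theta> -` {c<..d} \<inter> space M) = F d - F c"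
  proof -
    assume "c \<le> d"
    have "\<Theta> -` {c<..d} \<inter> space M = \<Theta> -` {..d} \<inter> space M - \<Theta> -` {..c} \<inter> space M" by auto
    moreover have "\<Theta> -` {..c} \<inter> space M \<subseteq> \<Theta> -` {..d} \<inter> space M" using \<open>c \<le> d\<close> by auto
    ultimately show ?thesis using P.finite_measure_Diff[OF meas meas] 1 by simp
  qed
  show "measure M (\<Theta> -` UNIV \<inter> space M) = 1" by (simp add: P.prob_space)
qed

lemma main2:
  fixes M :: "'a measure" and \<Theta> :: "nat \<Rightarrow> 'a \<Rightarrow> real" and F :: "real \<Rightarrow> real"
  assumes "prob_space M"
    and rv: "\<And>i. i < N \<Longrightarrow> \<Theta> i \<in> borel_measurable M"
    and indep: "prob_space.indep_vars M (\<lambda>_. borel) \<Theta> {..<N}"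
    and cdf: "\<And>i x. i < N \<Longrightarrow> measure M {\<omega> \<in> space M. \<Theta> i \<omega> \<le> x} = F x"
    and F0: "F 0 = 0" and A0: "A0 \<subseteq> {..<N}" and "N > 0" and "\<gamma> > 0"
    and Hdef: "H = {\<omega> \<in> space M. \<forall>i\<le>k.
                      (hilt_B N \<gamma> (\<lambda>i. \<Theta> i \<omega>) A0 i, hilt_D N \<gamma> (\<lambda>i. \<Theta> i \<omega>) A0 i) = hist i}"
    and Hpos: "measure M H > 0" and hk: "hist k = (j, m)" and F1: "F (\<gamma> * real j) < 1"
    and pdef: "p = (F (\<gamma> * real (j + m)) - F (\<gamma> * real j)) / (1 - F (\<gamma> * real j))"
  shows "measure M {\<omega> \<in> H. hilt_D N \<gamma> (\<lambda>i. \<Theta> i \<omega>) A0 (Suc k) = l} / measure M H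
                = real ((N - j - m) choose l) * p ^ l * (1 - p) ^ (N - j - m - l)"
proof -
  interpret P: prob_space M by fact
  define AA where "AA \<omega> r = hilt_A N \<gamma> (\<lambda>i. \<Theta> i \<omega>) A0 r" for \<omega> r
  define Ch where "Ch = {X \<in> PiE {..k} (\<lambda>_. Pow {..<N}). X 0 = A0 \<and> (\<forall>r<k. X r \<subseteq> X (Suc r)) \<and>
                          (\<forall>i\<le>k. (Bc X i, Dc X i) = hist i)}"
  define CE where "CE X k' = {\<omega>\<in>space M. \<forall>r\<le>k'. AA \<omega> r = X r}" for X k'
  define Ext where "Ext X L = X(Suc k := X k \<union> L)" for X :: "nat \<Rightarrow> nat set" and L
  define Sub where "Sub X = {L. L \<subseteq> {..<N} - X k \<and> card L = l}" for X :: "nat \<Rightarrow> nat set"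
  define n where "n = N - (j + m)"
  define F1 where "F1 = F (\<gamma> * real j)"
  define F2 where "F2 = F (\<gamma> * real (j + m))"
  define Pr where "Pr i S = measure M (\<Theta> i -` S \<inter> space M)" for i S
  define R where "R X = (\<Prod>i\<in>X k. Pr i (Jset \<gamma> X k i))" for X
  define Low where "Low X = {x. \<forall>r<k. \<gamma> * real (card (X r)) < x}" for X :: "nat \<Rightarrow> nat set"

  have valid: "X 0 = A0" "\<forall>r<k. X r \<subseteq> X (Suc r)" "\<forall>r\<le>k. X r \<subseteq> {..<N}"
    if "X \<in> Ch" for X using that by (auto simp: Ch_def PiE_iff)
  have pat: "\<forall>i\<le>k. (Bc X i, Dc X i) = hist i" if "X \<in> Ch" for X using that by (auto simp: Ch_def)
  have finX: "finite (X r)" if "X \<in> Ch" "r \<le> k" for X r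
    using valid(3)[OF that(1)] that(2) finite_subset by blast
  have cardXk: "card (X k) = j + m" if "X \<in> Ch" for X
  proof (cases k)
    case 0 then show ?thesis using pat[OF that] hk valid[OF that] by (auto simp: Bc_def Dc_def)
  next
    case (Suc k')
    have sub: "X k' \<subseteq> X k" using valid(2)[OF that] Suc by auto
    have "(Bc X k, Dc X k) = (j, m)" using pat[OF that] hk by auto
    then have "card (X k') = j" "card (X k - X k') = m" using Suc by (auto simp: Bc_def Dc_def)
    then show ?thesis using sub finX[OF that, of k] card_Diff_subset[of "X k'" "X k"]
      by (metis Suc card_mono finite_subset le_add_diff_inverse le_refl)
  qed
  have lowcase: "(k = 0 \<and> j = 0) \<or> (k > 0 \<and> card (X (k - 1)) = j)" if "X \<in> Ch" for X
    using pat[OF that] hk by (cases "k = 0") (auto simp: Bc_def)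
  have Low_eq: "Low X = (if k = 0 then UNIV else {\<gamma> * real j <..})" if "X \<in> Ch" for X
  proof (cases "k = 0")
    case True then show ?thesis by (simp add: Low_def)
  next
    case False
    then have cj: "card (X (k - 1)) = j" using lowcase[OF that] by auto
    have "card (X r) \<le> j" if "r < k" for r
    proof -
      have "\<forall>r<k - 1. X r \<subseteq> X (Suc r)" using valid(2)[OF \<open>X \<in> Ch\<close>] by auto
      then have "X r \<subseteq> X (k - 1)" using chain_mono[of "k - 1" X r] that by auto
      then show ?thesis using finX[OF \<open>X \<in> Ch\<close>, of "k - 1"] cj by (metis card_mono diff_le_self)
    qed
    then have le: "\<gamma> * real (card (X r)) \<le> \<gamma> * real j" if "r < k" for r
      using that \<open>\<gamma> > 0\<close> by (simp add: mult_left_mono)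
    have "(\<forall>r<k. \<gamma> * real (card (X r)) < x) \<longleftrightarrow> \<gamma> * real j < x" for x
    proof
      assume "\<forall>r<k. \<gamma> * real (card (X r)) < x"
      then have "\<gamma> * real (card (X (k - 1))) < x" using False by simp
      then show "\<gamma> * real j < x" using cj by simp
    next
      assume "\<gamma> * real j < x"
      then show "\<forall>r<k. \<gamma> * real (card (X r)) < x" using le by (meson order_le_less_trans)
    qed
    then show ?thesis using False by (auto simp: Low_def)
  qed
  have PrLow: "Pr i (Low X) = 1 - F1" "Pr i (Low X \<inter> {..\<gamma> * real (j + m)}) = F2 - F1"
      "Pr i (Low X \<inter> {\<gamma> * real (j + m)<..}) = 1 - F2"
    if "X \<in> Ch" "i < N" for X i
  proof -
    note pl = pr_lemmas[OF \<open>prob_space M\<close> rv[OF \<open>i < N\<close>] cdf[OF \<open>i < N\<close>]]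
    have mono: "\<gamma> * real j \<le> \<gamma> * real (j + m)" using \<open>\<gamma> > 0\<close> by simp
    show "Pr i (Low X) = 1 - F1"
      using Low_eq[OF that(1)] lowcase[OF that(1)] pl F0 by (auto simp: Pr_def F1_def)
    show "Pr i (Low X \<inter> {..\<gamma> * real (j + m)}) = F2 - F1"
    proof (cases "k = 0")
      case True then show ?thesis using Low_eq[OF that(1)] lowcase[OF that(1)] pl F0 by (auto simp: Pr_def F1_def F2_def)
    next
      case False
      have "{\<gamma> * real j<..} \<inter> {..\<gamma> * real (j + m)} = {\<gamma> * real j<..\<gamma> * real (j + m)}" by auto
      then show ?thesis using Low_eq[OF that(1)] False pl(3)[OF mono] by (simp add: Pr_def F1_def F2_def)
    qed
    show "Pr i (Low X \<inter> {\<gamma> * real (j + m)<..}) = 1 - F2"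
    proof -
      have "Low X \<inter> {\<gamma> * real (j + m)<..} = {\<gamma> * real (j + m)<..}"
        using Low_eq[OF that(1)] mono by auto
      then show ?thesis using pl by (simp add: Pr_def F2_def)
    qed
  qed
  have JLow: "Jset \<gamma> X k i = Low X" if "X \<in> Ch" "i \<in> {..<N} - X k" for X i
  proof -
    have "i \<notin> X r" "i \<notin> X (Suc r)" if "r < k" for r
      using chain_mono[OF valid(2)[OF \<open>X \<in> Ch\<close>]] \<open>i \<in> {..<N} - X k\<close> that
      by (meson Diff_iff Suc_leI less_imp_le subsetD)+
    then show ?thesis by (auto simp: Jset_def Low_def)
  qed
  have validExt: "Ext X L 0 = A0" "\<forall>r<Suc k. Ext X L r \<subseteq> Ext X L (Suc r)" "\<forall>r\<le>Suc k. Ext X L r \<subseteq> {..<N}"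
    if "X \<in> Ch" "L \<in> Sub X" for X L
    using valid[OF that(1)] that(2) by (auto simp: Ext_def Sub_def le_Suc_eq less_Suc_eq)
  have CE_sets: "CE X k \<in> sets M" "measure M (CE X k) = (\<Prod>i<N. Pr i (Jset \<gamma> X k i))" if "X \<in> Ch" for X
    unfolding CE_def AA_def Pr_def
    using chain_event[OF \<open>prob_space M\<close> indep \<open>N > 0\<close> valid[OF that] rv] by blast+
  have CE'_sets: "CE (Ext X L) (Suc k) \<in> sets M"
     "measure M (CE (Ext X L) (Suc k)) = (\<Prod>i<N. Pr i (Jset \<gamma> (Ext X L) (Suc k) i))"
    if "X \<in> Ch" "L \<in> Sub X" for X L
    unfolding CE_def AA_def Pr_def
    using chain_event[OF \<open>prob_space M\<close> indep \<open>N > 0\<close> validExt[OF that] rv] by blast+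
  have cardS: "card ({..<N} - X k) = n" if "X \<in> Ch" for X
  proof -
    have "X k \<subseteq> {..<N}" using valid(3)[OF that] by auto
    then show ?thesis using cardXk[OF that] card_Diff_subset[of "X k" "{..<N}"] finite_subset[of "X k" "{..<N}"]
      by (simp add: n_def)
  qed
  have mCE: "measure M (CE X k) = R X * (1 - F1) ^ n" if "X \<in> Ch" for X
  proof -
    have "(\<Prod>i<N. Pr i (Jset \<gamma> X k i)) = (\<Prod>i\<in>{..<N} - X k. Pr i (Jset \<gamma> X k i)) * R X"
      unfolding R_def using valid(3)[OF that] by (intro prod.subset_diff) auto
    also have "(\<Prod>i\<in>{..<N} - X k. Pr i (Jset \<gamma> X k i)) = (\<Prod>i\<in>{..<N} - X k. 1 - F1)"
      using JLow[OF that] PrLow(1)[OF that] by (intro prod.cong) auto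
    also have "\<dots> = (1 - F1) ^ n" using cardS[OF that] by simp
    finally show ?thesis using CE_sets(2)[OF that] by simp
  qed
  have mCE': "measure M (CE (Ext X L) (Suc k)) = R X * ((F2 - F1) ^ l * (1 - F2) ^ (n - l))"
    if "X \<in> Ch" "L \<in> Sub X" for X L
  proof -
    let ?S = "{..<N} - X k"
    have LS: "L \<subseteq> ?S" "card L = l" using that(2) by (auto simp: Sub_def)
    have JE: "Jset \<gamma> (Ext X L) (Suc k) i =
        Jset \<gamma> X k i \<inter> {x. i \<notin> X k \<longrightarrow> (x \<le> \<gamma> * real (card (X k)) \<longleftrightarrow> i \<in> X k \<union> L)}" for i
    proof -
      have "Jset \<gamma> (Ext X L) k i = Jset \<gamma> X k i" by (intro Jset_cong) (auto simp: Ext_def)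
      then show ?thesis using Jset_Suc[of _ \<gamma> "Ext X L" k i] by (auto simp: Ext_def)
    qed
    have "(\<Prod>i<N. Pr i (Jset \<gamma> (Ext X L) (Suc k) i)) =
          (\<Prod>i\<in>?S. Pr i (Jset \<gamma> (Ext X L) (Suc k) i)) * (\<Prod>i\<in>X k. Pr i (Jset \<gamma> (Ext X L) (Suc k) i))"
      using valid(3)[OF that(1)] by (intro prod.subset_diff) auto
    also have "(\<Prod>i\<in>X k. Pr i (Jset \<gamma> (Ext X L) (Suc k) i)) = R X"
      unfolding R_def by (intro prod.cong) (auto simp: JE)
    also have "(\<Prod>i\<in>?S. Pr i (Jset \<gamma> (Ext X L) (Suc k) i)) =
        (\<Prod>i\<in>?S - L. Pr i (Jset \<gamma> (Ext X L) (Suc k) i)) * (\<Prod>i\<in>L. Pr i (Jset \<gamma> (Ext X L) (Suc k) i))"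
      using LS by (intro prod.subset_diff) auto
    also have "(\<Prod>i\<in>L. Pr i (Jset \<gamma> (Ext X L) (Suc k) i)) = (\<Prod>i\<in>L. F2 - F1)"
    proof (intro prod.cong refl)
      fix i assume "i \<in> L"
      then have iS: "i \<in> ?S" using LS by auto
      have "Jset \<gamma> (Ext X L) (Suc k) i = Low X \<inter> {..\<gamma> * real (j + m)}"
        using JE[of i] JLow[OF that(1) iS] iS \<open>i \<in> L\<close> cardXk[OF that(1)] by auto
      then show "Pr i (Jset \<gamma> (Ext X L) (Suc k) i) = F2 - F1" using PrLow(2)[OF that(1)] iS by auto
    qed
    also have "(\<Prod>i\<in>?S - L. Pr i (Jset \<gamma> (Ext X L) (Suc k) i)) = (\<Prod>i\<in>?S - L. 1 - F2)"
    proof (intro prod.cong refl)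
      fix i assume i: "i \<in> ?S - L"
      then have iS: "i \<in> ?S" by auto
      have "Jset \<gamma> (Ext X L) (Suc k) i = Low X \<inter> {\<gamma> * real (j + m)<..}"
        using JE[of i] JLow[OF that(1) iS] i cardXk[OF that(1)] by (auto simp: not_le)
      then show "Pr i (Jset \<gamma> (Ext X L) (Suc k) i) = 1 - F2" using PrLow(3)[OF that(1)] iS by auto
    qed
    finally have eq: "(\<Prod>i<N. Pr i (Jset \<gamma> (Ext X L) (Suc k) i)) = (\<Prod>i\<in>?S - L. 1 - F2) * (\<Prod>i\<in>L. F2 - F1) * R X" .
    have "card (?S - L) = n - l"
      using LS cardS[OF that(1)] by (simp add: card_Diff_subset finite_subset)
    then show ?thesis using eq CE'_sets(2)[OF that] LS by simp
  qed
  have finCh: "finite Ch"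
    by (rule finite_subset[of _ "PiE {..k} (\<lambda>_. Pow {..<N})"]) (auto simp: Ch_def intro: finite_PiE)
  have finSub: "finite (Sub X)" for X
    by (rule finite_subset[of _ "Pow {..<N}"]) (auto simp: Sub_def)
  have Dsuc: "hilt_D N \<gamma> (\<lambda>i. \<Theta> i \<omega>) A0 (Suc k) = card (AA \<omega> (Suc k) - AA \<omega> k)" for \<omega>
    by (simp add: hilt_D_def AA_def del: hilt_A.simps)
  have restr_in: "restrict (AA \<omega>) {..k} \<in> Ch" if "\<omega> \<in> H" for \<omega>
  proof -
    have "\<forall>r\<le>k. hilt_A N \<gamma> (\<lambda>i. \<Theta> i \<omega>) A0 r = restrict (AA \<omega>) {..k} r" by (simp add: AA_def)
    then have "\<forall>i\<le>k. (Bc (restrict (AA \<omega>) {..k}) i, Dc (restrict (AA \<omega>) {..k}) i) = hist i"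
      using that BD_of_chain[of k N \<gamma> "\<lambda>i. \<Theta> i \<omega>" A0 "restrict (AA \<omega>) {..k}"] by (auto simp: Hdef)
    moreover have "AA \<omega> r \<subseteq> {..<N}" for r using A_sub[OF A0] by (simp add: AA_def)
    moreover have "AA \<omega> r \<subseteq> AA \<omega> (Suc r)" for r using A_mono_Suc by (simp add: AA_def)
    ultimately show ?thesis by (auto simp: Ch_def AA_def)
  qed
  have inCE: "\<omega> \<in> CE (restrict (AA \<omega>) {..k}) k" if "\<omega> \<in> space M" for \<omega>
    using that by (simp add: CE_def)
  have CE_H: "CE X k \<subseteq> H" if "X \<in> Ch" for X
  proof
    fix \<omega> assume "\<omega> \<in> CE X k"
    then have "\<omega> \<in> space M" "\<forall>r\<le>k. hilt_A N \<gamma> (\<lambda>i. \<Theta> i \<omega>) A0 r = X r" by (auto simp: CE_def AA_def)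
    then show "\<omega> \<in> H" using BD_of_chain[of k N \<gamma> "\<lambda>i. \<Theta> i \<omega>" A0 X] pat[OF that] by (auto simp: Hdef)
  qed
  have U1: "H = (\<Union>X\<in>Ch. CE X k)"
  proof
    show "H \<subseteq> (\<Union>X\<in>Ch. CE X k)"
    proof
      fix \<omega> assume "\<omega> \<in> H"
      then have "\<omega> \<in> space M" by (simp add: Hdef)
      then show "\<omega> \<in> (\<Union>X\<in>Ch. CE X k)" using restr_in[OF \<open>\<omega> \<in> H\<close>] inCE by blast
    qed
    show "(\<Union>X\<in>Ch. CE X k) \<subseteq> H" using CE_H by blast
  qed
  have D1: "disjoint_family_on (\<lambda>X. CE X k) Ch"
    unfolding disjoint_family_on_def
  proof (intro ballI impI)
    fix X Y assume XY: "X \<in> Ch" "Y \<in> Ch" "X \<noteq> Y"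
    show "CE X k \<inter> CE Y k = {}"
    proof (rule ccontr)
      assume "CE X k \<inter> CE Y k \<noteq> {}"
      then obtain \<omega> where "\<omega> \<in> CE X k" "\<omega> \<in> CE Y k" by blast
      then have "\<forall>r\<le>k. X r = Y r" by (auto simp: CE_def)
      then have "X = Y" using XY(1,2) by (intro PiE_ext[of X "{..k}" "\<lambda>_. Pow {..<N}"]) (auto simp: Ch_def)
      then show False using XY by simp
    qed
  qed
  have mH: "measure M H = (\<Sum>X\<in>Ch. measure M (CE X k))"
    unfolding U1 using finCh D1 CE_sets(1) by (intro P.finite_measure_finite_Union) auto
  define G where "G X = (\<Union>L\<in>Sub X. CE (Ext X L) (Suc k))" for X
  have CE'_sub: "CE (Ext X L) (Suc k) \<subseteq> CE X k" for X L
    by (auto simp: CE_def Ext_def)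
  have U2: "{\<omega> \<in> H. hilt_D N \<gamma> (\<lambda>i. \<Theta> i \<omega>) A0 (Suc k) = l} = (\<Union>X\<in>Ch. G X)"
  proof
    show "{\<omega> \<in> H. hilt_D N \<gamma> (\<lambda>i. \<Theta> i \<omega>) A0 (Suc k) = l} \<subseteq> (\<Union>X\<in>Ch. G X)"
    proof
      fix \<omega> assume w: "\<omega> \<in> {\<omega> \<in> H. hilt_D N \<gamma> (\<lambda>i. \<Theta> i \<omega>) A0 (Suc k) = l}"
      define X where "X = restrict (AA \<omega>) {..k}"
      define L where "L = AA \<omega> (Suc k) - AA \<omega> k"
      have XCh: "X \<in> Ch" using restr_in w by (simp add: X_def)
      have "AA \<omega> (Suc k) \<subseteq> {..<N}" using A_sub[OF A0] by (simp add: AA_def del: hilt_A.simps)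
      then have "L \<in> Sub X" using w Dsuc by (auto simp: Sub_def L_def X_def)
      moreover have "\<omega> \<in> CE (Ext X L) (Suc k)"
      proof -
        have "AA \<omega> k \<subseteq> AA \<omega> (Suc k)" using A_mono_Suc by (simp add: AA_def del: hilt_A.simps)
        then have "AA \<omega> (Suc k) = X k \<union> L" by (auto simp: X_def L_def)
        then show ?thesis using w by (auto simp: CE_def Ext_def X_def Hdef le_Suc_eq)
      qed
      ultimately show "\<omega> \<in> (\<Union>X\<in>Ch. G X)" using XCh by (auto simp: G_def)
    qed
    show "(\<Union>X\<in>Ch. G X) \<subseteq> {\<omega> \<in> H. hilt_D N \<gamma> (\<lambda>i. \<Theta> i \<omega>) A0 (Suc k) = l}"
    proof
      fix \<omega> assume "\<omega> \<in> (\<Union>X\<in>Ch. G X)"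
      then obtain X L where XL: "X \<in> Ch" "L \<in> Sub X" "\<omega> \<in> CE (Ext X L) (Suc k)" by (auto simp: G_def)
      then have "\<omega> \<in> H" using CE'_sub CE_H by blast
      have "AA \<omega> (Suc k) = X k \<union> L" "AA \<omega> k = X k" using XL(3) by (auto simp: CE_def Ext_def)
      moreover have "L \<inter> X k = {}" "card L = l" using XL(2) by (auto simp: Sub_def)
      ultimately have "AA \<omega> (Suc k) - AA \<omega> k = L" by blast
      then have "card (AA \<omega> (Suc k) - AA \<omega> k) = l" using \<open>card L = l\<close> by simp
      then show "\<omega> \<in> {\<omega> \<in> H. hilt_D N \<gamma> (\<lambda>i. \<Theta> i \<omega>) A0 (Suc k) = l}"
        using \<open>\<omega> \<in> H\<close> Dsuc by simp
    qed
  qed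
  have D2: "disjoint_family_on (\<lambda>L. CE (Ext X L) (Suc k)) (Sub X)" if "X \<in> Ch" for X
    unfolding disjoint_family_on_def
  proof (intro ballI impI)
    fix L L' assume LL: "L \<in> Sub X" "L' \<in> Sub X" "L \<noteq> L'"
    show "CE (Ext X L) (Suc k) \<inter> CE (Ext X L') (Suc k) = {}"
    proof (rule ccontr)
      assume "CE (Ext X L) (Suc k) \<inter> CE (Ext X L') (Suc k) \<noteq> {}"
      then obtain \<omega> where "\<omega> \<in> CE (Ext X L) (Suc k)" "\<omega> \<in> CE (Ext X L') (Suc k)" by blast
      then have "\<forall>r\<le>Suc k. AA \<omega> r = Ext X L r" "\<forall>r\<le>Suc k. AA \<omega> r = Ext X L' r" by (simp_all add: CE_def)
      then have "AA \<omega> (Suc k) = Ext X L (Suc k)" "AA \<omega> (Suc k) = Ext X L' (Suc k)" by blast+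
      then have "AA \<omega> (Suc k) = X k \<union> L" "AA \<omega> (Suc k) = X k \<union> L'" by (simp_all add: Ext_def)
      then have "X k \<union> L = X k \<union> L'" by simp
      moreover have "L \<inter> X k = {}" "L' \<inter> X k = {}" using LL by (auto simp: Sub_def)
      ultimately have "L = L'" by blast
      then show False using LL by simp
    qed
  qed
  have G_sets: "G X \<in> sets M" if "X \<in> Ch" for X
    unfolding G_def using finSub CE'_sets(1)[OF that] by (intro sets.finite_UN) auto
  have D3: "disjoint_family_on G Ch"
    using D1 CE'_sub unfolding disjoint_family_on_def G_def by blast
  have mG: "measure M (G X) = real (n choose l) * ((F2 - F1) ^ l * (1 - F2) ^ (n - l)) * R X" if "X \<in> Ch" for X
  proof -
    have "measure M (G X) = (\<Sum>L\<in>Sub X. measure M (CE (Ext X L) (Suc k)))"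
      unfolding G_def using finSub D2[OF that] CE'_sets(1)[OF that] by (intro P.finite_measure_finite_Union) auto
    also have "\<dots> = (\<Sum>L\<in>Sub X. R X * ((F2 - F1) ^ l * (1 - F2) ^ (n - l)))"
      using mCE'[OF that] by simp
    also have "card (Sub X) = n choose l"
      unfolding Sub_def using n_subsets[of "{..<N} - X k" l] cardS[OF that] by simp
    ultimately show ?thesis by simp
  qed
  have mE: "measure M {\<omega> \<in> H. hilt_D N \<gamma> (\<lambda>i. \<Theta> i \<omega>) A0 (Suc k) = l}
        = real (n choose l) * ((F2 - F1) ^ l * (1 - F2) ^ (n - l)) * (\<Sum>X\<in>Ch. R X)"
  proof -
    have "measure M (\<Union>X\<in>Ch. G X) = (\<Sum>X\<in>Ch. measure M (G X))"
      using finCh D3 G_sets by (intro P.finite_measure_finite_Union) auto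
    also have "\<dots> = (\<Sum>X\<in>Ch. real (n choose l) * ((F2 - F1) ^ l * (1 - F2) ^ (n - l)) * R X)"
      using mG by simp
    finally show ?thesis unfolding U2 by (simp add: sum_distrib_left)
  qed
  have mH2: "measure M H = (1 - F1) ^ n * (\<Sum>X\<in>Ch. R X)"
    using mH mCE by (simp add: sum_distrib_right mult.commute)
  have SR: "(\<Sum>X\<in>Ch. R X) \<noteq> 0" using Hpos mH2 by auto
  have F1p: "1 - F1 > 0" using F1 by (simp add: F1_def)
  have pF: "p = (F2 - F1) / (1 - F1)" "1 - p = (1 - F2) / (1 - F1)"
    using pdef F1p by (auto simp: F1_def F2_def field_simps)
  have nn: "N - j - m = n" by (simp add: n_def)
  show ?thesis
  proof (cases "l \<le> n")
    case True
    have pw: "(1 - F1) ^ n = (1 - F1) ^ l * (1 - F1) ^ (n - l)"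
      using True by (metis le_add_diff_inverse power_add)
    show ?thesis unfolding mE mH2 nn pF using SR F1p
      by (simp add: pw power_divide field_simps)
  next
    case False
    then have c0: "n choose l = 0" by (simp add: not_le binomial_eq_0)
    show ?thesis unfolding mE nn c0 by simp
  qed
qed

theorem mainTheorem8:
  fixes M :: "'a measure" and \<Theta> :: "nat \<Rightarrow> 'a \<Rightarrow> real" and F :: "real \<Rightarrow> real"
    and N :: nat and \<Gamma> :: real and A0 :: "nat set"
  assumes "prob_space M"
    and "N \<ge> 2"
    and "0 < \<Gamma>" and "\<Gamma> \<le> 1"
    and rv: "\<And>i. i < N \<Longrightarrow> \<Theta> i \<in> borel_measurable M"
    and indep: "prob_space.indep_vars M (\<lambda>_. borel) \<Theta> {..<N}"
    and cdf: "\<And>i x. i < N \<Longrightarrow> measure M {\<omega> \<in> space M. \<Theta> i \<omega> \<le> x} = F x"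
    and "continuous_on UNIV F"
    and "F 0 = 0"
    and "A0 \<subseteq> {..<N}" and "A0 \<noteq> {}"
  shows "(\<forall>\<omega> k. hilt_B N (\<Gamma> / (real N - 1)) (\<lambda>i. \<Theta> i \<omega>) A0 (Suc k)
                = hilt_B N (\<Gamma> / (real N - 1)) (\<lambda>i. \<Theta> i \<omega>) A0 k
                  + hilt_D N (\<Gamma> / (real N - 1)) (\<lambda>i. \<Theta> i \<omega>) A0 k)
       \<and> (\<forall>k (hist :: nat \<Rightarrow> nat \<times> nat) j m l.
           let \<gamma> = \<Gamma> / (real N - 1);
               H = {\<omega> \<in> space M. \<forall>i\<le>k.
                      (hilt_B N \<gamma> (\<lambda>i. \<Theta> i \<omega>) A0 i, hilt_D N \<gamma> (\<lambda>i. \<Theta> i \<omega>) A0 i) = hist i};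
               p = (F (\<gamma> * real (j + m)) - F (\<gamma> * real j)) / (1 - F (\<gamma> * real j))
           in (measure M H > 0 \<and> hist k = (j, m) \<and> F (\<gamma> * real j) < 1) \<longrightarrow>
              measure M {\<omega> \<in> H. hilt_D N \<gamma> (\<lambda>i. \<Theta> i \<omega>) A0 (Suc k) = l} / measure M H
                = real ((N - j - m) choose l) * p ^ l * (1 - p) ^ (N - j - m - l))"
proof -
  have finA0: "finite A0" using assms(10) finite_subset by blast
  have Npos: "N > 0" using assms(2) by simp
  have gpos: "\<Gamma> / (real N - 1) > 0" using assms(2,3) by simp
  show ?thesis
  proof (intro conjI allI)
    fix \<omega> k
    show "hilt_B N (\<Gamma> / (real N - 1)) (\<lambda>i. \<Theta> i \<omega>) A0 (Suc k)
                = hilt_B N (\<Gamma> / (real N - 1)) (\<lambda>i. \<Theta> i \<omega>) A0 k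
                  + hilt_D N (\<Gamma> / (real N - 1)) (\<lambda>i. \<Theta> i \<omega>) A0 k"
      by (rule part1[OF finA0])
  next
    fix k and hist :: "nat \<Rightarrow> nat \<times> nat" and j m l
    show "let \<gamma> = \<Gamma> / (real N - 1);
               H = {\<omega> \<in> space M. \<forall>i\<le>k.
                      (hilt_B N \<gamma> (\<lambda>i. \<Theta> i \<omega>) A0 i, hilt_D N \<gamma> (\<lambda>i. \<Theta> i \<omega>) A0 i) = hist i};
               p = (F (\<gamma> * real (j + m)) - F (\<gamma> * real j)) / (1 - F (\<gamma> * real j))
           in (measure M H > 0 \<and> hist k = (j, m) \<and> F (\<gamma> * real j) < 1) \<longrightarrow>
              measure M {\<omega> \<in> H. hilt_D N \<gamma> (\<lambda>i. \<Theta> i \<omega>) A0 (Suc k) = l} / measure M H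
                = real ((N - j - m) choose l) * p ^ l * (1 - p) ^ (N - j - m - l)"
      unfolding Let_def
    proof (intro impI, elim conjE)
      assume h: "0 < measure M {\<omega> \<in> space M. \<forall>i\<le>k.
                      (hilt_B N (\<Gamma> / (real N - 1)) (\<lambda>i. \<Theta> i \<omega>) A0 i, hilt_D N (\<Gamma> / (real N - 1)) (\<lambda>i. \<Theta> i \<omega>) A0 i) = hist i}"
        "hist k = (j, m)" "F (\<Gamma> / (real N - 1) * real j) < 1"
      show "measure M {\<omega> \<in> {\<omega> \<in> space M. \<forall>i\<le>k.
                      (hilt_B N (\<Gamma> / (real N - 1)) (\<lambda>i. \<Theta> i \<omega>) A0 i, hilt_D N (\<Gamma> / (real N - 1)) (\<lambda>i. \<Theta> i \<omega>) A0 i) = hist i}.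
                 hilt_D N (\<Gamma> / (real N - 1)) (\<lambda>i. \<Theta> i \<omega>) A0 (Suc k) = l} /
            measure M {\<omega> \<in> space M. \<forall>i\<le>k.
                      (hilt_B N (\<Gamma> / (real N - 1)) (\<lambda>i. \<Theta> i \<omega>) A0 i, hilt_D N (\<Gamma> / (real N - 1)) (\<lambda>i. \<Theta> i \<omega>) A0 i) = hist i} =
            real ((N - j - m) choose l) *
            ((F (\<Gamma> / (real N - 1) * real (j + m)) - F (\<Gamma> / (real N - 1) * real j)) / (1 - F (\<Gamma> / (real N - 1) * real j))) ^ l *
            (1 - (F (\<Gamma> / (real N - 1) * real (j + m)) - F (\<Gamma> / (real N - 1) * real j)) / (1 - F (\<Gamma> / (real N - 1) * real j))) ^ (N - j - m - l)"
        by (rule main2[OF assms(1) rv indep cdf assms(9,10) Npos gpos refl h refl])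
    qed
  qed
qed

end
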